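(* Let $n\ge 3$ and let $\mathcal{P}_E^c(D_{2n})$ be the conjugacy super enhanced power graph of the dihedral group $D_{2n}$. (i) If $n$ is odd, the Sombor spectrum of $\mathcal{P}_E^c(D_{2n})$ consists of $-(n-1)\sqrt2$ with multiplicity $n-2$, $-n\sqrt2$ with multiplicity $n-1$, and the three roots (with multiplicity) of \[x\big(x-(n-1)(n-2)\sqrt2\big)\big(x-n(n-1)\sqrt2\big)-(n-1)(5n^2-6n+2)\big(x-n(n-1)\sqrt2\big)-n(5n^2-4n+1)\big(x-(n-1)(n-2)\sqrt2\big).\] (ii) If $n$ is even, the Sombor spectrum consists of $-\tfrac n2\sqrt2$ with multiplicity $n-2$, $-(n-1)\sqrt2$ with multiplicity $n-2$, $\tfrac{n(n-2)}{4}\sqrt2$ with multiplicity $1$, and the three roots (with multiplicity) of \[x\big(x-(n-1)(n-2)\sqrt2\big)\Big(x-\tfrac{n(n-2)}{4}\sqrt2\Big)-(n-1)(5n^2-6n+2)\Big(x-\tfrac{n(n-2)}{4}\sqrt2\Big)-\tfrac n4(17n^2-16n+4)\big(x-(n-2)(n-1)\sqrt2\big).\]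
   Context: For a finite simple graph $\Gamma$ with vertices $u_1,\dots,u_N$, the Sombor matrix $S(\Gamma)$ has $(i,j)$ entry $\sqrt{\deg(u_i)^2+\deg(u_j)^2}$ if $u_i,u_j$ are adjacent and $0$ otherwise; the Sombor spectrum is the multiset of its eigenvalues. $D_{2n}=\langle a,b: a^n=b^2=e,\ ba=a^{-1}b\rangle$. The enhanced power graph $\mathcal{P}_E(G)$ has vertex set $G$, distinct vertices adjacent iff they lie in a common cyclic subgroup. The conjugacy super enhanced power graph $\mathcal{P}_E^c(G)$ has vertex set $G$, and distinct $g,h$ are adjacent iff $g,h$ are conjugate or there exist $g'$ conjugate to $g$ and $h'$ conjugate to $h$ adjacent in $\mathcal{P}_E(G)$. *)

theory Defs
  imports "HOL-Algebra.Group" "Jordan_Normal_Form.Char_Poly"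
    "HOL-Computational_Algebra.Fundamental_Theorem_Algebra"
begin

text \<open>Element (k, s) represents a^k b^s (0 \<le> k < n); so a = (1,False), b = (0,True).
  Multiplication: a^i b^s a^j b^t = a^(i + (-1)^s j) b^(s+t).\<close>

definition dihedral :: "nat \<Rightarrow> (nat \<times> bool) monoid" where
  "dihedral n = \<lparr> carrier = {0..<n} \<times> UNIV,
     mult = (\<lambda>(i, s) (j, t). ((if s then i + n - j else i + j) mod n, s \<noteq> t)),
     one = (0, False) \<rparr>"

definition enh_power_adj where
  "enh_power_adj G g h \<longleftrightarrow> g \<in> carrier G \<and> h \<in> carrier G \<and> g \<noteq> h \<and>
     (\<exists>c \<in> carrier G. \<exists>(i::int) (j::int). g = c [^]\<^bsub>G\<^esub> i \<and> h = c [^]\<^bsub>G\<^esub> j)"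

definition conjugate where
  "conjugate G g h \<longleftrightarrow> g \<in> carrier G \<and> h \<in> carrier G \<and>
     (\<exists>x \<in> carrier G. h = x \<otimes>\<^bsub>G\<^esub> g \<otimes>\<^bsub>G\<^esub> inv\<^bsub>G\<^esub> x)"

definition conj_super_enh_power_adj where
  "conj_super_enh_power_adj G g h \<longleftrightarrow> g \<in> carrier G \<and> h \<in> carrier G \<and> g \<noteq> h \<and>
     (conjugate G g h \<or>
      (\<exists>g' h'. conjugate G g g' \<and> conjugate G h h' \<and> enh_power_adj G g' h'))"

definition graph_deg :: "'a set \<Rightarrow> ('a \<Rightarrow> 'a \<Rightarrow> bool) \<Rightarrow> 'a \<Rightarrow> nat" where
  "graph_deg V E v = card {w \<in> V. E v w}"

text \<open>Sombor matrix w.r.t. the vertex ordering given by the list vs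
  (the spectrum does not depend on the ordering).\<close>
definition sombor_matrix :: "'a list \<Rightarrow> ('a \<Rightarrow> 'a \<Rightarrow> bool) \<Rightarrow> real mat" where
  "sombor_matrix vs E = mat (length vs) (length vs) (\<lambda>(i, j).
     if E (vs ! i) (vs ! j)
     then sqrt (real (graph_deg (set vs) E (vs ! i))^2 + real (graph_deg (set vs) E (vs ! j))^2)
     else 0)"

definition sombor_spectrum :: "'a list \<Rightarrow> ('a \<Rightarrow> 'a \<Rightarrow> bool) \<Rightarrow> complex multiset" where
  "sombor_spectrum vs E = proots (char_poly (map_mat complex_of_real (sombor_matrix vs E)))"

text \<open>Sombor spectrum of the conjugacy super enhanced power graph of D_{2n},
  vertices listed as e, a, ..., a^(n-1), b, ab, ..., a^(n-1) b (this list enumerates carrier (dihedral n) without repetition).\<close>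
definition dihedral_cse_sombor_spectrum :: "nat \<Rightarrow> complex multiset" where
  "dihedral_cse_sombor_spectrum n =
     sombor_spectrum (map (\<lambda>k. (k, False)) [0..<n] @ map (\<lambda>k. (k, True)) [0..<n])
       (conj_super_enh_power_adj (dihedral n))"

end

theory Submission
  imports Defs "HOL-Algebra.Generated_Groups"
begin

lemma dih_carrier[simp]: "carrier (dihedral n) = {0..<n} \<times> UNIV"
  by (simp add: dihedral_def)
lemma dih_one: "one (dihedral n) = (0, False)"
  by (simp add: dihedral_def)
lemma dih_mult: "mult (dihedral n) (i,s) (j,t) = ((if s then i + n - j else i + j) mod n, s \<noteq> t)"
  by (simp add: dihedral_def)

lemma dih_fst_int:
  assumes "j \<le> n"
  shows "int ((if s then i + n - j else i + j) mod n) = (int i + (if s then - int j else int j)) mod int n"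
proof (cases s)
  case True
  have "int ((i + n - j) mod n) = (int i + int n - int j) mod int n" using assms
    by (simp add: zmod_int of_nat_diff)
  also have "int i + int n - int j = (int i - int j) + int n" by simp
  also have "((int i - int j) + int n) mod int n = (int i - int j) mod int n" by (rule mod_add_self2)
  finally show ?thesis using True by simp
next
  case False then show ?thesis by (simp add: zmod_int)
qed

lemma dih_group:
  assumes "n > 0"
  shows "group (dihedral n)"
proof (rule groupI)
  fix x y assume "x \<in> carrier (dihedral n)" "y \<in> carrier (dihedral n)"
  then show "x \<otimes>\<^bsub>dihedral n\<^esub> y \<in> carrier (dihedral n)" using assms
    by (cases x; cases y; simp add: dih_mult)
next
  show "\<one>\<^bsub>dihedral n\<^esub> \<in> carrier (dihedral n)" using assms by (simp add: dih_one)
next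
  fix x assume "x \<in> carrier (dihedral n)"
  then show "\<one>\<^bsub>dihedral n\<^esub> \<otimes>\<^bsub>dihedral n\<^esub> x = x"
    by (cases x; simp add: dih_mult dih_one)
next
  fix x assume x: "x \<in> carrier (dihedral n)"
  obtain i s where xe: "x = (i,s)" by (cases x)
  show "\<exists>y\<in>carrier (dihedral n). y \<otimes>\<^bsub>dihedral n\<^esub> x = \<one>\<^bsub>dihedral n\<^esub>"
  proof (cases s)
    case True
    then show ?thesis using x xe by (intro bexI[of _ "(i,True)"]) (auto simp: dih_mult dih_one)
  next
    case False
    have "((n - i) mod n + i) mod n = 0" using x xe
      by (simp add: mod_add_left_eq)
    then show ?thesis using False x xe assms by (intro bexI[of _ "((n-i) mod n,False)"]) (auto simp: dih_mult dih_one)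
  qed
next
  fix x y z assume x: "x \<in> carrier (dihedral n)" and y: "y \<in> carrier (dihedral n)" and z: "z \<in> carrier (dihedral n)"
  obtain i s where xe: "x = (i,s)" by (cases x)
  obtain j t where ye: "y = (j,t)" by (cases y)
  obtain k u where ze: "z = (k,u)" by (cases z)
  have jn: "j \<le> n" "k \<le> n" using y z ye ze by auto
  define a where "a = (if s then i + n - j else i + j) mod n"
  define b where "b = (if t then j + n - k else j + k) mod n"
  have an: "a \<le> n" "b \<le> n" using assms unfolding a_def b_def by (simp_all add: less_imp_le)
  have "int ((if s \<noteq> t then a + n - k else a + k) mod n) = int ((if s then i + n - b else i + b) mod n)"
    unfolding dih_fst_int[OF jn(2)] dih_fst_int[OF an(2)] unfolding a_def b_def dih_fst_int[OF jn(1)] dih_fst_int[OF jn(2)]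
    by (cases s; cases t; simp add: mod_simps algebra_simps)
  then show "x \<otimes>\<^bsub>dihedral n\<^esub> y \<otimes>\<^bsub>dihedral n\<^esub> z = x \<otimes>\<^bsub>dihedral n\<^esub> (y \<otimes>\<^bsub>dihedral n\<^esub> z)"
    unfolding xe ye ze dih_mult a_def[symmetric] b_def[symmetric] by auto
qed

context fixes n :: nat assumes npos: "n > 0"
begin

interpretation D: group "dihedral n" by (rule dih_group[OF npos])

lemma snd_mult: "snd (x \<otimes>\<^bsub>dihedral n\<^esub> y) = (snd x \<noteq> snd y)"
  by (cases x; cases y; simp add: dih_mult)

lemma fst_mult_lt: "fst (x \<otimes>\<^bsub>dihedral n\<^esub> y) < n"
  using npos by (cases x; cases y; simp add: dih_mult)

lemma par_mult: assumes "even n" "fst y \<le> n" shows "even (fst (x \<otimes>\<^bsub>dihedral n\<^esub> y) + fst x + fst y)"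
proof -
  obtain i s where x: "x = (i,s)" by (cases x)
  obtain j t where y: "y = (j,t)" by (cases y)
  have e: "even (m mod n + m)" for m :: nat
  proof -
    have "(m mod n) mod 2 = m mod 2" using assms by (simp add: mod_mod_cancel)
    then show ?thesis by (metis even_add even_iff_mod_2_eq_zero)
  qed
  show ?thesis
  proof (cases s)
    case True
    have "j \<le> i + n" using assms y by simp
    then show ?thesis using e[of "i + n - j"] assms True unfolding x y dih_mult by auto
  next
    case False
    then show ?thesis using e[of "i + j"] unfolding x y dih_mult by auto
  qed
qed

lemma snd_inv: "x \<in> carrier (dihedral n) \<Longrightarrow> snd (inv\<^bsub>dihedral n\<^esub> x) = snd x"
  using snd_mult[of x "inv\<^bsub>dihedral n\<^esub> x"] D.r_inv[of x] by (simp add: dih_one)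

lemma conj_snd: assumes "conjugate (dihedral n) g h" shows "snd h = snd g"
proof -
  from assms obtain x where x: "x \<in> carrier (dihedral n)" and h: "h = x \<otimes>\<^bsub>dihedral n\<^esub> g \<otimes>\<^bsub>dihedral n\<^esub> inv\<^bsub>dihedral n\<^esub> x"
    unfolding conjugate_def by auto
  show ?thesis unfolding h snd_mult snd_inv[OF x] by (cases "snd x"; cases "snd g") auto
qed

lemma conj_par: assumes "even n" "conjugate (dihedral n) g h" shows "even (fst g + fst h)"
proof -
  from assms(2) obtain x where x: "x \<in> carrier (dihedral n)" and h: "h = x \<otimes>\<^bsub>dihedral n\<^esub> g \<otimes>\<^bsub>dihedral n\<^esub> inv\<^bsub>dihedral n\<^esub> x"
    and g: "g \<in> carrier (dihedral n)"
    unfolding conjugate_def by auto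
  have ix: "fst (inv\<^bsub>dihedral n\<^esub> x) \<le> n" using D.inv_closed[OF x] by auto
  have gx: "fst g \<le> n" using g by auto
  have 1: "even (fst x + fst (inv\<^bsub>dihedral n\<^esub> x))"
    using par_mult[OF assms(1) ix, of x] D.r_inv[OF x] by (simp add: dih_one)
  show ?thesis using par_mult[OF assms(1) gx, of x] par_mult[OF assms(1) ix, of "x \<otimes>\<^bsub>dihedral n\<^esub> g"] 1 h
    by presburger
qed

lemma conj_one: assumes "conjugate (dihedral n) g h" shows "g = (0,False) \<longleftrightarrow> h = (0,False)"
proof -
  from assms obtain x where x: "x \<in> carrier (dihedral n)" and g: "g \<in> carrier (dihedral n)"
    and h: "h = x \<otimes>\<^bsub>dihedral n\<^esub> g \<otimes>\<^bsub>dihedral n\<^esub> inv\<^bsub>dihedral n\<^esub> x"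
    unfolding conjugate_def by auto
  have "h = \<one>\<^bsub>dihedral n\<^esub> \<longleftrightarrow> g = \<one>\<^bsub>dihedral n\<^esub>"
  proof
    assume "h = \<one>\<^bsub>dihedral n\<^esub>"
    then have hh: "x \<otimes>\<^bsub>dihedral n\<^esub> g \<otimes>\<^bsub>dihedral n\<^esub> inv\<^bsub>dihedral n\<^esub> x = \<one>\<^bsub>dihedral n\<^esub>" using h by simp
    have "x \<otimes>\<^bsub>dihedral n\<^esub> g = (x \<otimes>\<^bsub>dihedral n\<^esub> g \<otimes>\<^bsub>dihedral n\<^esub> inv\<^bsub>dihedral n\<^esub> x) \<otimes>\<^bsub>dihedral n\<^esub> x"
      using x g by (simp add: D.m_assoc del: dih_carrier)
    also have "\<dots> = x" using hh x by (simp del: dih_carrier)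
    finally show "g = \<one>\<^bsub>dihedral n\<^esub>" using x g by (simp del: dih_carrier)
  next
    assume "g = \<one>\<^bsub>dihedral n\<^esub>" then show "h = \<one>\<^bsub>dihedral n\<^esub>" using h x by (simp del: dih_carrier)
  qed
  then show ?thesis by (simp add: dih_one)
qed

lemma conj_refl: assumes "g \<in> carrier (dihedral n)" shows "conjugate (dihedral n) g g"
proof -
  have "g = \<one>\<^bsub>dihedral n\<^esub> \<otimes>\<^bsub>dihedral n\<^esub> g \<otimes>\<^bsub>dihedral n\<^esub> inv\<^bsub>dihedral n\<^esub> \<one>\<^bsub>dihedral n\<^esub>"
    using assms by (simp del: dih_carrier)
  then show ?thesis unfolding conjugate_def using assms D.one_closed by blast
qed

lemma refl_sq: "i < n \<Longrightarrow> (i,True) \<otimes>\<^bsub>dihedral n\<^esub> (i,True) = (0,False)"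
  by (simp add: dih_mult)

lemma refl_inv: "i < n \<Longrightarrow> inv\<^bsub>dihedral n\<^esub> (i,True) = (i,True)"
  using D.inv_equality[of "(i,True)" "(i,True)"] refl_sq by (simp add: dih_one)

lemma conj_refl_explicit: assumes "i < n" "k < n"
  shows "conjugate (dihedral n) (k,True) ((2*i + n - k) mod n, True)"
proof -
  have "(i,True) \<otimes>\<^bsub>dihedral n\<^esub> (k,True) \<otimes>\<^bsub>dihedral n\<^esub> inv\<^bsub>dihedral n\<^esub> (i,True) = ((2*i + n - k) mod n, True)"
  proof -
    have e: "i + (i + n - k) = 2*i + n - k" using assms by simp
    have "(i,True) \<otimes>\<^bsub>dihedral n\<^esub> (k,True) \<otimes>\<^bsub>dihedral n\<^esub> inv\<^bsub>dihedral n\<^esub> (i,True) = (((i + n - k) mod n + i) mod n, True)"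
      using assms by (simp add: refl_inv dih_mult)
    also have "((i + n - k) mod n + i) mod n = (i + (i + n - k)) mod n" by (metis add.commute mod_add_right_eq)
    finally show ?thesis unfolding e .
  qed
  then show ?thesis unfolding conjugate_def using assms npos by (intro conjI bexI[of _ "(i,True)"]) auto
qed

lemma conj_refls: assumes "k < n" "j < n" "odd n \<or> even (k + j)"
  shows "conjugate (dihedral n) (k,True) (j,True)"
proof -
  obtain i where i: "i < n" "(2*i) mod n = (j + k) mod n"
  proof (cases "odd n")
    case True
    define i where "i = ((j+k) * ((n+1) div 2)) mod n"
    have "(2*i) mod n = (j + k) * (2 * ((n+1) div 2)) mod n" unfolding i_def by (simp add: mod_mult_right_eq mult.commute mult.left_commute)
    also have "2 * ((n+1) div 2) = n + 1" using True by presburger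
    also have "(j + k) * (n + 1) = (j + k) + (j + k) * n" by (simp add: algebra_simps)
    also have "((j + k) + (j + k) * n) mod n = (j + k) mod n" by simp
    finally show ?thesis using that[of i] npos unfolding i_def by auto
  next
    case False
    then have "even (k+j)" using assms by auto
    then have "2 * ((j+k) div 2) = j + k" by presburger
    then show ?thesis using that[of "(j+k) div 2"] assms by auto
  qed
  have "(2*i + n - k) mod n = j"
  proof -
    have "int ((2*i + n - k) mod n) = (int (2*i) + int n - int k) mod int n" using assms by (simp add: zmod_int of_nat_diff)
    also have "\<dots> = (int ((2*i) mod n) + int n - int k) mod int n" unfolding zmod_int by (metis add_diff_eq mod_add_left_eq)
    also have "\<dots> = (int ((j+k) mod n) + int n - int k) mod int n" using i by simp
    also have "\<dots> = ((int j + int k) + (int n - int k)) mod int n" unfolding zmod_int of_nat_add by (metis add_diff_eq mod_add_left_eq)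
    also have "\<dots> = (int j + int n) mod int n" by simp
    also have "\<dots> = int j" using assms by simp
    finally show ?thesis by linarith
  qed
  then show ?thesis using conj_refl_explicit[OF i(1) assms(1)] by simp
qed

end

context fixes n :: nat assumes n1: "n > 1"
begin

interpretation D: group "dihedral n" by (rule dih_group) (use n1 in auto)

lemma npos': "n > 0" using n1 by simp

lemma pow_rot: "snd c = False \<Longrightarrow> c \<in> carrier (dihedral n) \<Longrightarrow> snd (c [^]\<^bsub>dihedral n\<^esub> (i::int)) = False"
proof -
  assume c: "snd c = False" "c \<in> carrier (dihedral n)"
  have "subgroup {x \<in> carrier (dihedral n). snd x = False} (dihedral n)"
  proof (rule D.subgroupI)
    show "{x \<in> carrier (dihedral n). snd x = False} \<noteq> {}" using n1 by (auto intro!: exI[of _ 0])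
  qed (auto simp: snd_mult[OF npos'] snd_inv[OF npos'] simp del: dih_carrier)
  from D.subgroup_int_pow_closed[OF this, of c i] c show ?thesis by simp
qed

lemma inv_e: "inv\<^bsub>dihedral n\<^esub> (0,False) = (0,False)"
  using D.inv_one by (simp add: dih_one)

lemma pow_refl: "snd c \<Longrightarrow> c \<in> carrier (dihedral n) \<Longrightarrow> c [^]\<^bsub>dihedral n\<^esub> (i::int) \<in> {(0,False), c}"
proof -
  assume c: "snd c" "c \<in> carrier (dihedral n)"
  obtain k where k: "c = (k, True)" "k < n" using c by (cases c) auto
  have "subgroup {(0,False), c} (dihedral n)"
    by (rule D.subgroupI) (use k n1 in \<open>auto simp: refl_inv[OF npos'] refl_sq dih_mult inv_e\<close>)
  from D.subgroup_int_pow_closed[OF this, of c i] c show ?thesis by simp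
qed

lemma pow_gen: "(Suc 0,False) [^]\<^bsub>dihedral n\<^esub> (k::nat) = (k mod n, False)"
proof (induction k)
  case 0 then show ?case by (simp add: dih_one)
next
  case (Suc k)
  then show ?case by (simp add: dih_mult mod_Suc_eq)
qed

lemma enh_rot: assumes "i < n" "j < n" "i \<noteq> j"
  shows "enh_power_adj (dihedral n) (i,False) (j,False)"
proof -
  have 1: "(i,False) = (Suc 0,False) [^]\<^bsub>dihedral n\<^esub> (int i)" using assms by (simp add: int_pow_int pow_gen)
  have 2: "(j,False) = (Suc 0,False) [^]\<^bsub>dihedral n\<^esub> (int j)" using assms by (simp add: int_pow_int pow_gen)
  have 3: "(Suc 0,False) \<in> carrier (dihedral n)" "(i,False) \<in> carrier (dihedral n)" "(j,False) \<in> carrier (dihedral n)"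
    using assms n1 by auto
  show ?thesis unfolding enh_power_adj_def using 1 2 3 assms(3) by blast
qed

lemma enh_one: assumes "v \<in> carrier (dihedral n)" "v \<noteq> (0,False)"
  shows "enh_power_adj (dihedral n) (0,False) v"
proof -
  have 1: "(0,False) = v [^]\<^bsub>dihedral n\<^esub> (0::int)" by (simp add: dih_one)
  have 2: "v = v [^]\<^bsub>dihedral n\<^esub> (1::int)" using assms(1) by (simp del: dih_carrier)
  have 3: "(0,False) \<in> carrier (dihedral n)" using n1 by auto
  show ?thesis unfolding enh_power_adj_def using 1 2 3 assms by blast
qed

lemma adj_iff: assumes u: "u \<in> carrier (dihedral n)" and v: "v \<in> carrier (dihedral n)"
  shows "conj_super_enh_power_adj (dihedral n) u v \<longleftrightarrow> u \<noteq> v \<and> (u = (0,False) \<or> v = (0,False) \<or>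
     (snd u = snd v \<and> (snd u \<longrightarrow> odd n \<or> even (fst u + fst v))))"
proof
  assume E: "conj_super_enh_power_adj (dihedral n) u v"
  then have uv: "u \<noteq> v" unfolding conj_super_enh_power_adj_def by auto
  show "u \<noteq> v \<and> (u = (0,False) \<or> v = (0,False) \<or>
     (snd u = snd v \<and> (snd u \<longrightarrow> odd n \<or> even (fst u + fst v))))"
  proof (cases "u = (0,False) \<or> v = (0,False)")
    case True then show ?thesis using uv by auto
  next
    case False
    then have ne: "u \<noteq> (0,False)" "v \<noteq> (0,False)" by auto
    have "snd u = snd v \<and> (snd u \<longrightarrow> odd n \<or> even (fst u + fst v))"
    proof (cases "conjugate (dihedral n) u v")
      case True
      then show ?thesis using conj_snd[OF npos' True] conj_par[OF npos' _ True] by auto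
    next
      case False
      then obtain g' h' where g': "conjugate (dihedral n) u g'" and h': "conjugate (dihedral n) v h'"
        and e: "enh_power_adj (dihedral n) g' h'"
        using E unfolding conj_super_enh_power_adj_def by auto
      from e obtain c i j where c: "c \<in> carrier (dihedral n)" and gi: "g' = c [^]\<^bsub>dihedral n\<^esub> (i::int)"
        and hj: "h' = c [^]\<^bsub>dihedral n\<^esub> (j::int)" and gh: "g' \<noteq> h'"
        unfolding enh_power_adj_def by blast
      have g1: "g' \<noteq> (0,False)" using conj_one[OF npos' g'] ne by auto
      have h1: "h' \<noteq> (0,False)" using conj_one[OF npos' h'] ne by auto
      show ?thesis
      proof (cases "snd c")
        case True
        then show ?thesis using pow_refl[OF True c, of i] pow_refl[OF True c, of j] gi hj g1 h1 gh by auto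
      next
        case False
        then have "snd g' = False" "snd h' = False" using pow_rot[OF _ c] gi hj by auto
        then show ?thesis using conj_snd[OF npos' g'] conj_snd[OF npos' h'] by auto
      qed
    qed
    then show ?thesis using uv by auto
  qed
next
  assume R: "u \<noteq> v \<and> (u = (0,False) \<or> v = (0,False) \<or>
     (snd u = snd v \<and> (snd u \<longrightarrow> odd n \<or> even (fst u + fst v))))"
  obtain i s where ue: "u = (i,s)" by (cases u)
  obtain j t where ve: "v = (j,t)" by (cases v)
  have ij: "i < n" "j < n" using u v ue ve by auto
  have cu: "conjugate (dihedral n) u u" "conjugate (dihedral n) v v" using conj_refl[OF npos'] u v by auto
  show "conj_super_enh_power_adj (dihedral n) u v"
    unfolding conj_super_enh_power_adj_def
  proof (intro conjI u v)
    show "u \<noteq> v" using R by auto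
    consider "u = (0,False)" | "v = (0,False)" | "s = False" "t = False" | "s = True" "t = True" "odd n \<or> even (i + j)"
      using R ue ve by auto
    then show "conjugate (dihedral n) u v \<or> (\<exists>g' h'. conjugate (dihedral n) u g' \<and> conjugate (dihedral n) v h' \<and> enh_power_adj (dihedral n) g' h')"
    proof cases
      case 1
      have "enh_power_adj (dihedral n) u v" using 1 enh_one[OF v] R by auto
      then show ?thesis using cu by blast
    next
      case 2
      have "enh_power_adj (dihedral n) v u" using enh_one[OF u] R 2 by auto
      then have "enh_power_adj (dihedral n) u v" unfolding enh_power_adj_def by blast
      then show ?thesis using cu by blast
    next
      case 3
      have "enh_power_adj (dihedral n) u v" using 3 enh_rot[OF ij] R ue ve by auto
      then show ?thesis using cu by blast
    next
      case 4
      have "conjugate (dihedral n) (i,True) (j,True)" using 4 conj_refls[OF npos' ij] by simp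
      then show ?thesis using 4 ue ve by simp
    qed
  qed
qed

end

lemma mult_mat_entry: "i < N \<Longrightarrow> j < N \<Longrightarrow>
  (mat N N f * mat N N g) $$ (i,j) = (\<Sum>k\<in>{0..<N}. f (i,k) * g (k,j))"
  by (simp add: scalar_prod_def)

lemma sum_delta_diff:
  fixes f :: "nat \<Rightarrow> 'a::comm_ring_1"
  assumes "finite A" "a \<in> A" "b \<in> A"
  shows "(\<Sum>j\<in>A. f j * (of_bool (j = a) - of_bool (j = b))) = f a - f b"
proof -
  have "(\<Sum>j\<in>A. f j * (of_bool (j = a) - of_bool (j = b))) = (\<Sum>j\<in>A. f j * of_bool (j = a)) - (\<Sum>j\<in>A. f j * of_bool (j = b))"
    by (simp add: right_diff_distrib sum_subtractf)
  also have "\<dots> = f a - f b"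
  proof -
    have "A \<inter> {j. j = a} = {a}" "A \<inter> {j. j = b} = {b}" using assms by auto
    then show ?thesis using assms by simp
  qed
  finally show ?thesis .
qed

lemma sum_delta_diff':
  fixes f :: "nat \<Rightarrow> 'a::comm_ring_1"
  assumes "finite A" "a \<in> A" "b \<in> A"
  shows "(\<Sum>j\<in>A. (of_bool (j = a) - of_bool (j = b)) * f j) = f a - f b"
  using sum_delta_diff[OF assms, of f] by (simp add: mult.commute)

locale eqpart =
  fixes N K :: nat and cl h g :: "nat \<Rightarrow> nat" and w :: "nat \<Rightarrow> nat \<Rightarrow> complex"
  assumes cl: "\<And>i. i < N \<Longrightarrow> cl i < K"
  and h: "\<And>c. c < K \<Longrightarrow> h c < N \<and> cl (h c) = c"
  and g: "\<And>l. K \<le> l \<Longrightarrow> l < N \<Longrightarrow> g l < N \<and> g l \<noteq> h (cl (g l))"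
  and ginj: "inj_on g {K..<N}"
  and KN: "K \<le> N"
begin

definition C where "C c = {j \<in> {0..<N}. cl j = c}"
definition m where "m c = card (C c)"
definition ck where "ck k = (if k < K then k else cl (g k))"

definition Pm :: "complex mat" where "Pm = mat N N (\<lambda>(j,l). if l < K then of_bool (cl j = l)
   else of_bool (j = h (cl (g l))) - of_bool (j = g l))"
definition Qm :: "complex mat" where "Qm = mat N N (\<lambda>(k,j). of_bool (cl j = ck k) / of_nat (m (ck k))
   - (if K \<le> k then of_bool (j = g k) else 0))"
definition Am :: "complex mat" where "Am = mat N N (\<lambda>(i,j). if i = j then 0 else w (cl i) (cl j))"
definition Bm :: "complex mat" where "Bm = mat N N (\<lambda>(k,l). if k < K \<and> l < K then w k l * (of_nat (m l) - of_bool (k = l))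
   else if K \<le> k \<and> k = l then - w (cl (g l)) (cl (g l)) else 0)"

lemma C_fin: "finite (C c)" unfolding C_def by auto

lemma m_pos: "c < K \<Longrightarrow> m c > 0"
  unfolding m_def using h[of c] C_fin[of c] by (auto simp: C_def card_gt_0_iff)

lemma ck_lt: "k < N \<Longrightarrow> ck k < K"
  unfolding ck_def using cl g by auto

lemma sum_ind_C: "(\<Sum>j\<in>{0..<N}. f j * of_bool (cl j = l)) = (\<Sum>j\<in>C l. f j :: complex)"
proof -
  have "{0..<N} \<inter> {j. cl j = l} = C l" by (auto simp: C_def)
  then show ?thesis using sum_mult_of_bool_eq[of "{0..<N}" f "\<lambda>j. cl j = l"] by simp
qed

lemma QP: "Qm * Pm = 1\<^sub>m N"
proof (rule eq_matI)
  fix k l assume k: "k < dim_row (1\<^sub>m N)" and l: "l < dim_col (1\<^sub>m N)"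
  then have kN: "k < N" and lN: "l < N" by auto
  define q where "q j = of_bool (cl j = ck k) / of_nat (m (ck k)) - (if K \<le> k then of_bool (j = g k) else (0::complex))" for j
  have e: "(Qm * Pm) $$ (k,l) = (\<Sum>j\<in>{0..<N}. q j * (if l < K then of_bool (cl j = l)
   else of_bool (j = h (cl (g l))) - of_bool (j = g l)))"
    unfolding Qm_def Pm_def by (simp only: mult_mat_entry[OF kN lN]) (simp add: q_def)
  show "(Qm * Pm) $$ (k,l) = 1\<^sub>m N $$ (k,l)"
  proof (cases "l < K")
    case True
    then have "(Qm * Pm) $$ (k,l) = (\<Sum>j\<in>C l. q j)" unfolding e by (simp add: sum_ind_C)
    also have "\<dots> = (\<Sum>j\<in>C l. of_bool (cl j = ck k) / of_nat (m (ck k))) - (\<Sum>j\<in>C l. (if K \<le> k then of_bool (j = g k) else 0))"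
      unfolding q_def by (simp add: sum_subtractf)
    also have "(\<Sum>j\<in>C l. of_bool (cl j = ck k) / of_nat (m (ck k))) = (of_bool (l = ck k) :: complex)"
    proof -
      have "(\<Sum>j\<in>C l. of_bool (cl j = ck k) / of_nat (m (ck k))) = (\<Sum>j\<in>C l. of_bool (l = ck k) / of_nat (m (ck k)) :: complex)"
        by (rule sum.cong) (auto simp: C_def)
      also have "\<dots> = of_nat (m l) * (of_bool (l = ck k) / of_nat (m (ck k)))" by (simp add: m_def)
      also have "\<dots> = of_bool (l = ck k)"
      proof -
        have "(of_nat (m l)::complex) \<noteq> 0" using m_pos[OF True] by simp
        then show ?thesis by (cases "l = ck k") auto
      qed
      finally show ?thesis .
    qed
    also have "(\<Sum>j\<in>C l. (if K \<le> k then of_bool (j = g k) else 0)) = (if K \<le> k then of_bool (cl (g k) = l) else (0::complex))"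
    proof (cases "K \<le> k")
      case True
      have gk: "g k < N" using g[OF True kN] by auto
      have "(\<Sum>j\<in>C l. of_bool (j = g k)) = (of_bool (g k \<in> C l) :: complex)"
      proof (cases "g k \<in> C l")
        case True
        then have "C l \<inter> {j. j = g k} = {g k}" by auto
        then show ?thesis using True C_fin[of l] by simp
      next
        case False
        then have "C l \<inter> {j. j = g k} = {}" by auto
        then show ?thesis using False C_fin[of l] by simp
      qed
      then show ?thesis using True gk by (simp add: C_def)
    qed simp
    also have "of_bool (l = ck k) - (if K \<le> k then of_bool (cl (g k) = l) else 0) = (of_bool (k = l) :: complex)"
      using True unfolding ck_def by (cases "k < K") auto
    finally show ?thesis using kN lN by simp
  next
    case False
    have lK: "K \<le> l" using False by simp
    have gl: "g l < N" "g l \<noteq> h (cl (g l))" using g[OF lK lN] by auto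
    have hl: "h (cl (g l)) < N" "cl (h (cl (g l))) = cl (g l)" using h[OF cl[OF gl(1)]] by auto
    have "(Qm * Pm) $$ (k,l) = (\<Sum>j\<in>{0..<N}. q j * (of_bool (j = h (cl (g l))) - of_bool (j = g l)))"
      unfolding e using False by simp
    also have "\<dots> = q (h (cl (g l))) - q (g l)" by (rule sum_delta_diff) (use gl hl in auto)
    also have "\<dots> = (if K \<le> k then of_bool (g l = g k) - of_bool (h (cl (g l)) = g k) else 0)"
      unfolding q_def using hl by simp
    also have "\<dots> = of_bool (k = l)"
    proof (cases "K \<le> k")
      case True
      have gk: "g k < N" "g k \<noteq> h (cl (g k))" using g[OF True kN] by auto
      have "h (cl (g l)) \<noteq> g k" using gk hl by metis
      moreover have "g l = g k \<longleftrightarrow> k = l" using ginj True lK kN lN unfolding inj_on_def by auto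
      ultimately show ?thesis using True by simp
    next
      case False then show ?thesis using lK by auto
    qed
    finally show ?thesis using kN lN by simp
  qed
qed (auto simp: Qm_def Pm_def)

lemma m_C: "i < N \<Longrightarrow> of_nat (card (C l \<inter> {j. i \<noteq> j})) = (of_nat (m l) - of_bool (cl i = l) :: complex)"
proof -
  assume iN: "i < N"
  have "C l \<inter> {j. i \<noteq> j} = C l - {i}" by auto
  then have "card (C l \<inter> {j. i \<noteq> j}) = card (C l) - (if i \<in> C l then 1 else 0)"
    using C_fin[of l] by (simp add: card_Diff_singleton_if)
  moreover have "i \<in> C l \<Longrightarrow> card (C l) \<ge> 1" using C_fin[of l] by (metis One_nat_def Suc_leI card_gt_0_iff empty_iff)
  ultimately show ?thesis using iN by (auto simp: m_def C_def of_nat_diff)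
qed

lemma AP_PB: "Am * Pm = Pm * Bm"
proof (rule eq_matI)
  fix i l assume i: "i < dim_row (Pm * Bm)" and l: "l < dim_col (Pm * Bm)"
  then have iN: "i < N" and lN: "l < N" by (auto simp: Pm_def Bm_def)
  define a :: "nat \<Rightarrow> complex" where "a j = (if i = j then 0 else w (cl i) (cl j))" for j
  define p :: "nat \<Rightarrow> complex" where "p j = (if l < K then of_bool (cl j = l)
   else of_bool (j = h (cl (g l))) - of_bool (j = g l))" for j
  define pi :: "nat \<Rightarrow> complex" where "pi j = (if j < K then of_bool (cl i = j)
   else of_bool (i = h (cl (g j))) - of_bool (i = g j))" for j
  define b :: "nat \<Rightarrow> complex" where "b k = (if k < K \<and> l < K then w k l * (of_nat (m l) - of_bool (k = l))
   else if K \<le> k \<and> k = l then - w (cl (g l)) (cl (g l)) else 0)" for k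
  have e1: "(Am * Pm) $$ (i,l) = (\<Sum>j\<in>{0..<N}. a j * p j)"
    unfolding Am_def Pm_def by (simp only: mult_mat_entry[OF iN lN]) (simp add: a_def p_def)
  have e2: "(Pm * Bm) $$ (i,l) = (\<Sum>j\<in>{0..<N}. pi j * b j)"
    unfolding Bm_def Pm_def by (simp only: mult_mat_entry[OF iN lN]) (simp add: pi_def b_def)
  show "(Am * Pm) $$ (i,l) = (Pm * Bm) $$ (i,l)"
  proof (cases "l < K")
    case True
    have "(\<Sum>j\<in>{0..<N}. a j * p j) = (\<Sum>j\<in>C l. a j)" unfolding p_def using True by (simp add: sum_ind_C)
    also have "\<dots> = (\<Sum>j\<in>C l. w (cl i) l * of_bool (i \<noteq> j))"
      by (rule sum.cong) (auto simp: a_def C_def)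
    also have "\<dots> = w (cl i) l * of_nat (card (C l \<inter> {j. i \<noteq> j}))"
      by (simp add: sum_distrib_left[symmetric] C_fin)
    also have "\<dots> = w (cl i) l * (of_nat (m l) - of_bool (cl i = l))" using m_C[OF iN] by simp
    finally have L: "(Am * Pm) $$ (i,l) = w (cl i) l * (of_nat (m l) - of_bool (cl i = l))" using e1 by simp
    have "(\<Sum>j\<in>{0..<N}. pi j * b j) = (\<Sum>j\<in>{0..<N}. of_bool (j = cl i) * (w j l * (of_nat (m l) - of_bool (j = l))))"
    proof (rule sum.cong)
      fix j assume "j \<in> {0..<N}"
      show "pi j * b j = of_bool (j = cl i) * (w j l * (of_nat (m l) - of_bool (j = l)))"
        unfolding pi_def b_def using True cl[OF iN] by (cases "j < K") auto
    qed simp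
    also have "\<dots> = w (cl i) l * (of_nat (m l) - of_bool (cl i = l))"
    proof -
      have "{0..<N} \<inter> {j. j = cl i} = {cl i}" using cl[OF iN] KN by auto
      then show ?thesis by (simp add: sum.If_cases)
    qed
    finally show ?thesis using L e2 by simp
  next
    case False
    have lK: "K \<le> l" using False by simp
    have gl: "g l < N" "g l \<noteq> h (cl (g l))" using g[OF lK lN] by auto
    have hl: "h (cl (g l)) < N" "cl (h (cl (g l))) = cl (g l)" using h[OF cl[OF gl(1)]] by auto
    have "(\<Sum>j\<in>{0..<N}. a j * p j) = (\<Sum>j\<in>{0..<N}. a j * (of_bool (j = h (cl (g l))) - of_bool (j = g l)))"
      unfolding p_def using False by simp
    also have "\<dots> = a (h (cl (g l))) - a (g l)" by (rule sum_delta_diff) (use gl hl in auto)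
    finally have L: "(Am * Pm) $$ (i,l) = a (h (cl (g l))) - a (g l)" using e1 by simp
    have "(\<Sum>j\<in>{0..<N}. pi j * b j) = (\<Sum>j\<in>{0..<N}. (pi l * (- w (cl (g l)) (cl (g l)))) * of_bool (j = l))"
      by (rule sum.cong) (use lK in \<open>auto simp: b_def False\<close>)
    also have "\<dots> = pi l * (- w (cl (g l)) (cl (g l)))"
    proof -
      have "{0..<N} \<inter> {j. j = l} = {l}" using lN by auto
      then show ?thesis using sum_mult_of_bool_eq[of "{0..<N}" "\<lambda>_. pi l * (- w (cl (g l)) (cl (g l)))" "\<lambda>j. j = l"]
        by (simp only:) simp
    qed
    finally have R: "(Pm * Bm) $$ (i,l) = pi l * (- w (cl (g l)) (cl (g l)))" using e2 by simp
    show ?thesis unfolding L R a_def pi_def using False gl hl by auto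
  qed
qed (auto simp: Am_def Pm_def Bm_def)

lemma similar: "similar_mat Am Bm"
proof -
  have c: "Am \<in> carrier_mat N N" "Bm \<in> carrier_mat N N" "Pm \<in> carrier_mat N N" "Qm \<in> carrier_mat N N"
    by (auto simp: Am_def Bm_def Pm_def Qm_def)
  have PQ: "Pm * Qm = 1\<^sub>m N" by (rule mat_mult_left_right_inverse[OF c(4) c(3) QP])
  have "Am = Am * (Pm * Qm)" using c by (simp add: PQ)
  also have "\<dots> = (Am * Pm) * Qm" using c by (simp add: assoc_mult_mat[of _ N N _ N _ N])
  also have "\<dots> = Pm * Bm * Qm" by (simp add: AP_PB)
  finally have "Am = Pm * Bm * Qm" .
  then show ?thesis by (intro similar_matI[of _ _ Pm Qm N]) (use c PQ QP in auto)
qed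

definition B1 :: "complex mat" where "B1 = mat K K (\<lambda>(k,l). w k l * (of_nat (m l) - of_bool (k = l)))"
definition Dm :: "complex mat" where "Dm = mat (N-K) (N-K) (\<lambda>(i,j). if i = j then - w (cl (g (K+i))) (cl (g (K+i))) else 0)"

lemma B_block: "Bm = four_block_mat B1 (0\<^sub>m K (N-K)) (0\<^sub>m (N-K) K) Dm"
  by (rule eq_matI) (use KN in \<open>auto simp: Bm_def B1_def Dm_def\<close>)

lemma char_poly_block: "char_poly Bm = char_poly B1 * char_poly Dm"
proof -
  let ?cm = "\<lambda> A. [:0, 1:] \<cdot>\<^sub>m 1\<^sub>m (dim_row A) + map_mat (\<lambda>a. [:- a:]) (A :: complex mat)"
  have cB1: "B1 \<in> carrier_mat K K" and cD: "Dm \<in> carrier_mat (N-K) (N-K)" by (auto simp: B1_def Dm_def)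
  have "char_poly Bm = det (?cm Bm)" unfolding char_poly_defs ..
  also have "?cm Bm = four_block_mat (?cm B1) (0\<^sub>m K (N-K)) (0\<^sub>m (N-K) K) (?cm Dm)"
    unfolding B_block by (rule eq_matI) (use cB1 cD KN in \<open>auto simp: one_poly_def\<close>)
  also have "det \<dots> = det (?cm B1) * det (?cm Dm)"
    by (rule det_four_block_mat_lower_left_zero) (use cB1 cD in auto)
  also have "\<dots> = char_poly B1 * char_poly Dm" unfolding char_poly_defs ..
  finally show ?thesis .
qed

lemma char_poly_D: "char_poly Dm = prod_list (map (\<lambda>i. [: w (cl (g (K+i))) (cl (g (K+i))), 1 :]) [0..<N-K])"
proof -
  have cD: "Dm \<in> carrier_mat (N-K) (N-K)" by (auto simp: Dm_def)
  have ut: "upper_triangular Dm" unfolding upper_triangular_def by (auto simp: Dm_def)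
  show ?thesis unfolding char_poly_upper_triangular[OF cD ut] diag_mat_def
    by (rule arg_cong[where f = prod_list]) (auto simp: Dm_def)
qed

theorem main: "char_poly Am = char_poly B1 * prod_list (map (\<lambda>i. [: w (cl (g (K+i))) (cl (g (K+i))), 1 :]) [0..<N-K])"
  using char_poly_similar[OF similar] char_poly_block char_poly_D by simp

end

lemma det1: "A \<in> carrier_mat 1 1 \<Longrightarrow> det A = A $$ (0,0)"
  by (rule det_single)

lemma det2: assumes "A \<in> carrier_mat 2 2"
  shows "det A = A $$ (0,0) * A $$ (1,1) - A $$ (0,1) * A $$ (1,0)"
proof -
  have "det A = (\<Sum>i<2. A $$ (i,0) * cofactor A i 0)" by (rule laplace_expansion_column[OF assms]) simp
  also have "\<dots> = A $$ (0,0) * cofactor A 0 0 + A $$ (1,0) * cofactor A 1 0" by (simp add: numeral_2_eq_2)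
  also have "cofactor A 0 0 = A $$ (1,1)" unfolding cofactor_def
    using assms by (subst det1) (auto simp: mat_delete_def)
  also have "cofactor A 1 0 = - A $$ (0,1)" unfolding cofactor_def
    using assms by (subst det1) (auto simp: mat_delete_def)
  finally show ?thesis by (simp add: algebra_simps)
qed

lemma det3: assumes "A \<in> carrier_mat 3 3"
  shows "det A = A $$ (0,0) * (A $$ (1,1) * A $$ (2,2) - A $$ (1,2) * A $$ (2,1))
     - A $$ (1,0) * (A $$ (0,1) * A $$ (2,2) - A $$ (0,2) * A $$ (2,1))
     + A $$ (2,0) * (A $$ (0,1) * A $$ (1,2) - A $$ (0,2) * A $$ (1,1))"
proof -
  have "det A = (\<Sum>i<3. A $$ (i,0) * cofactor A i 0)" by (rule laplace_expansion_column[OF assms]) simp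
  also have "\<dots> = A $$ (0,0) * cofactor A 0 0 + A $$ (1,0) * cofactor A 1 0 + A $$ (2,0) * cofactor A 2 0"
    by (simp add: numeral_eq_Suc)
  also have "cofactor A 0 0 = A $$ (1,1) * A $$ (2,2) - A $$ (1,2) * A $$ (2,1)" unfolding cofactor_def
    using assms by (subst det2) (auto simp: mat_delete_def numeral_2_eq_2)
  also have "cofactor A 1 0 = - (A $$ (0,1) * A $$ (2,2) - A $$ (0,2) * A $$ (2,1))" unfolding cofactor_def
    using assms by (subst det2) (auto simp: mat_delete_def numeral_2_eq_2)
  also have "cofactor A 2 0 = A $$ (0,1) * A $$ (1,2) - A $$ (0,2) * A $$ (1,1)" unfolding cofactor_def
    using assms by (subst det2) (auto simp: mat_delete_def numeral_2_eq_2)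
  finally show ?thesis by (simp add: algebra_simps)
qed

lemma det4: assumes "A \<in> carrier_mat 4 4"
  shows "det A = A $$ (0,0) * det (mat_delete A 0 0) - A $$ (1,0) * det (mat_delete A 1 0)
     + A $$ (2,0) * det (mat_delete A 2 0) - A $$ (3,0) * det (mat_delete A 3 0)"
proof -
  have "det A = (\<Sum>i<4. A $$ (i,0) * cofactor A i 0)" by (rule laplace_expansion_column[OF assms]) simp
  also have "\<dots> = A $$ (0,0) * cofactor A 0 0 + A $$ (1,0) * cofactor A 1 0 + A $$ (2,0) * cofactor A 2 0 + A $$ (3,0) * cofactor A 3 0"
    by (simp add: numeral_eq_Suc)
  finally show ?thesis by (simp add: cofactor_def)
qed

definition vsl :: "nat \<Rightarrow> (nat \<times> bool) list" where
  "vsl n = map (\<lambda>k. (k, False)) [0..<n] @ map (\<lambda>k. (k, True)) [0..<n]"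

definition clf :: "nat \<Rightarrow> nat \<Rightarrow> nat" where
  "clf n i = (if i = 0 then 0 else if i < n then 1 else if odd n \<or> even (i - n) then 2 else 3)"

definition Cn :: "nat \<Rightarrow> nat \<Rightarrow> nat set" where
  "Cn n c = {j \<in> {0..<2*n}. clf n j = c}"

lemma vsl_len[simp]: "length (vsl n) = 2*n" by (simp add: vsl_def)

lemma vsl_nth: "i < 2*n \<Longrightarrow> vsl n ! i = (if i < n then (i,False) else (i-n,True))"
  by (cases "i < n") (auto simp: vsl_def nth_append)

lemma vsl_set: "set (vsl n) = carrier (dihedral n)"
  by (auto simp: vsl_def)

lemma vsl_inj: "inj_on (\<lambda>i. vsl n ! i) {0..<2*n}"
  unfolding inj_on_def by (auto simp: vsl_nth split: if_splits)

lemma vsl_set': "set (vsl n) = (\<lambda>i. vsl n ! i) ` {0..<2*n}"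
  unfolding set_conv_nth by auto

lemma E_idx: assumes "n > 1" "i < 2*n" "j < 2*n"
  shows "conj_super_enh_power_adj (dihedral n) (vsl n ! i) (vsl n ! j) \<longleftrightarrow>
    i \<noteq> j \<and> (clf n i = 0 \<or> clf n j = 0 \<or> clf n i = clf n j)"
proof -
  have ci: "vsl n ! i \<in> carrier (dihedral n)" "vsl n ! j \<in> carrier (dihedral n)"
    using assms vsl_set[of n] nth_mem[of i "vsl n"] nth_mem[of j "vsl n"] by auto
  show ?thesis unfolding adj_iff[OF assms(1) ci] using assms
    by (auto simp: vsl_nth clf_def split: if_splits)
qed

lemma clf0: "clf n j = 0 \<longleftrightarrow> j = 0" by (simp add: clf_def)
lemma clf_0[simp]: "clf n 0 = 0" by (simp add: clf_def)

lemma deg_idx: assumes n: "n > 1" and i: "i < 2*n"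
  shows "graph_deg (set (vsl n)) (conj_super_enh_power_adj (dihedral n)) (vsl n ! i) =
    (if i = 0 then 2*n - 1 else card (Cn n (clf n i)))"
proof -
  let ?E = "conj_super_enh_power_adj (dihedral n)"
  let ?S = "{j \<in> {0..<2*n}. i \<noteq> j \<and> (clf n i = 0 \<or> clf n j = 0 \<or> clf n i = clf n j)}"
  have "{w \<in> set (vsl n). ?E (vsl n ! i) w} = (\<lambda>j. vsl n ! j) ` {j \<in> {0..<2*n}. ?E (vsl n ! i) (vsl n ! j)}"
    unfolding vsl_set' by auto
  also have "{j \<in> {0..<2*n}. ?E (vsl n ! i) (vsl n ! j)} = ?S"
    using E_idx[OF n i] by auto
  finally have eq: "{w \<in> set (vsl n). ?E (vsl n ! i) w} = (\<lambda>j. vsl n ! j) ` ?S" .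
  have "inj_on (\<lambda>j. vsl n ! j) ?S" by (rule inj_on_subset[OF vsl_inj]) auto
  then have "graph_deg (set (vsl n)) ?E (vsl n ! i) = card ?S"
    unfolding graph_deg_def eq by (rule card_image)
  also have "card ?S = (if i = 0 then 2*n - 1 else card (Cn n (clf n i)))"
  proof (cases "i = 0")
    case True
    then have "?S = {1..<2*n}" by (auto simp: clf0)
    then show ?thesis using True by simp
  next
    case False
    then have c: "clf n i \<noteq> 0" by (simp add: clf0)
    have "?S = insert 0 (Cn n (clf n i) - {i})" using False c n by (auto simp: Cn_def clf0)
    moreover have "0 \<notin> Cn n (clf n i) - {i}" using c by (auto simp: Cn_def clf0)
    moreover have "i \<in> Cn n (clf n i)" using i by (simp add: Cn_def)
    moreover have "finite (Cn n (clf n i))" by (simp add: Cn_def)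
    ultimately have "card ?S = Suc (card (Cn n (clf n i)) - 1)" by (simp add: card_Diff_singleton)
    also have "\<dots> = card (Cn n (clf n i))"
    proof -
      have "card (Cn n (clf n i)) > 0" using \<open>i \<in> Cn n (clf n i)\<close> \<open>finite (Cn n (clf n i))\<close>
        using card_gt_0_iff by blast
      then show ?thesis by simp
    qed
    finally show ?thesis using False by simp
  qed
  finally show ?thesis .
qed

lemma card_C1: "n > 1 \<Longrightarrow> card (Cn n 1) = n - 1"
proof -
  assume "n > 1"
  then have "Cn n 1 = {1..<n}" by (auto simp: Cn_def clf_def)
  then show ?thesis by simp
qed

lemma card_C2_odd: "odd n \<Longrightarrow> card (Cn n 2) = n"
proof -
  assume o: "odd n"
  then have "Cn n 2 = {n..<2*n}" by (auto simp: Cn_def clf_def)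
  then show ?thesis by simp
qed

lemma card_C2_even: assumes "even n" "n > 1" shows "card (Cn n 2) = n div 2"
proof -
  have "Cn n 2 = (\<lambda>t. n + 2*t) ` {..<n div 2}"
  proof
    show "Cn n 2 \<subseteq> (\<lambda>t. n + 2*t) ` {..<n div 2}"
    proof
      fix x assume "x \<in> Cn n 2"
      then have x: "n \<le> x" "x < 2*n" "even (x - n)" using assms by (auto simp: Cn_def clf_def split: if_splits)
      then have "x = n + 2 * ((x - n) div 2)" "(x - n) div 2 < n div 2" using assms by presburger+
      then show "x \<in> (\<lambda>t. n + 2*t) ` {..<n div 2}" by blast
    qed
  next
    show "(\<lambda>t. n + 2*t) ` {..<n div 2} \<subseteq> Cn n 2"
      using assms by (auto simp: Cn_def clf_def)
  qed
  moreover have "inj (\<lambda>t::nat. n + 2*t)" by (auto simp: inj_def)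
  ultimately show ?thesis by (simp add: card_image inj_on_subset)
qed

lemma card_C3_even: assumes "even n" "n > 1" shows "card (Cn n 3) = n div 2"
proof -
  have "Cn n 3 = (\<lambda>t. n + 1 + 2*t) ` {..<n div 2}"
  proof
    show "Cn n 3 \<subseteq> (\<lambda>t. n + 1 + 2*t) ` {..<n div 2}"
    proof
      fix x assume "x \<in> Cn n 3"
      then have x: "n \<le> x" "x < 2*n" "odd (x - n)" using assms by (auto simp: Cn_def clf_def split: if_splits)
      then have "x = n + 1 + 2 * ((x - n) div 2)" "(x - n) div 2 < n div 2" using assms by presburger+
      then show "x \<in> (\<lambda>t. n + 1 + 2*t) ` {..<n div 2}" by blast
    qed
  next
    show "(\<lambda>t. n + 1 + 2*t) ` {..<n div 2} \<subseteq> Cn n 3"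
    proof
      fix x assume "x \<in> (\<lambda>t. n + 1 + 2*t) ` {..<n div 2}"
      then obtain t where t: "t < n div 2" "x = n + 1 + 2*t" by auto
      then have "x < 2*n" "n \<le> x" "odd (x - n)" "x \<noteq> 0" "\<not> x < n" using assms by presburger+
      then show "x \<in> Cn n 3" using assms by (auto simp: Cn_def clf_def)
    qed
  qed
  moreover have "inj (\<lambda>t::nat. n + 1 + 2*t)" by (auto simp: inj_def)
  ultimately show ?thesis by (simp add: card_image inj_on_subset)
qed

definition Kf :: "nat \<Rightarrow> nat" where "Kf n = (if odd n then 3 else 4)"
definition hf :: "nat \<Rightarrow> nat \<Rightarrow> nat" where
  "hf n c = (if c = 0 then 0 else if c = 1 then 1 else if c = 2 then n else n + 1)"
definition gf :: "nat \<Rightarrow> nat \<Rightarrow> nat" where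
  "gf n l = (if l < n + Kf n - 2 then l - (Kf n - 2) else l)"
definition dgf :: "nat \<Rightarrow> nat \<Rightarrow> nat" where
  "dgf n c = (if c = 0 then 2*n - 1 else card (Cn n c))"
definition wfun :: "nat \<Rightarrow> nat \<Rightarrow> nat \<Rightarrow> complex" where
  "wfun n c d = complex_of_real (if c = 0 \<or> d = 0 \<or> c = d then sqrt (real (dgf n c)^2 + real (dgf n d)^2) else 0)"

lemma eqpart_inst: assumes n: "n \<ge> 3" shows "eqpart (2*n) (Kf n) (clf n) (hf n) (gf n)"
proof
  fix i assume "i < 2*n" then show "clf n i < Kf n" by (auto simp: clf_def Kf_def)
next
  fix c assume "c < Kf n" then show "hf n c < 2*n \<and> clf n (hf n c) = c"
    using n by (auto simp: clf_def Kf_def hf_def)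
next
  fix l assume "Kf n \<le> l" "l < 2*n" then show "gf n l < 2*n \<and> gf n l \<noteq> hf n (clf n (gf n l))"
    using n by (auto simp: clf_def Kf_def hf_def gf_def)
next
  show "inj_on (gf n) {Kf n..<2*n}" unfolding inj_on_def using n by (auto simp: Kf_def gf_def split: if_splits)
next
  show "Kf n \<le> 2*n" using n by (auto simp: Kf_def)
qed

lemma sombor_Am: assumes n: "n \<ge> 3"
  shows "map_mat complex_of_real (sombor_matrix (vsl n) (conj_super_enh_power_adj (dihedral n))) =
     eqpart.Am (2*n) (clf n) (wfun n)"
proof -
  interpret E: eqpart "2*n" "Kf n" "clf n" "hf n" "gf n" "wfun n" by (rule eqpart_inst[OF n])
  have deg: "graph_deg (set (vsl n)) (conj_super_enh_power_adj (dihedral n)) (vsl n ! i) = dgf n (clf n i)"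
    if "i < 2*n" for i using deg_idx[of n i] that n by (auto simp: dgf_def clf0)
  show ?thesis
    by (rule eq_matI) (use n in \<open>auto simp: E.Am_def sombor_matrix_def E_idx deg wfun_def clf0\<close>)
qed

lemma sum_list_singletons: "sum_list (map (\<lambda>x. {#f x#}) xs) = mset (map f xs)"
  by (induction xs) auto

lemma mset_two_const: assumes "k \<le> M" "\<And>i. i < k \<Longrightarrow> f i = c1" "\<And>i. k \<le> i \<Longrightarrow> i < M \<Longrightarrow> f i = c2"
  shows "mset (map f [0..<M]) = replicate_mset k c1 + replicate_mset (M - k) c2"
proof -
  have "[0..<M] = [0..<k] @ [k..<M]" using assms(1) by (metis le_add_diff_inverse upt_add_eq_append zero_le)
  moreover have "map f [0..<k] = replicate k c1" by (rule replicate_eqI) (auto simp: assms(2))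
  moreover have "map f [k..<M] = replicate (M - k) c2" by (rule replicate_eqI) (auto simp: assms(3))
  ultimately show ?thesis by simp
qed

lemma sqrt_dbl: "sqrt (real a ^ 2 + real a ^ 2) = real a * sqrt 2"
proof -
  have "real a ^ 2 + real a ^ 2 = 2 * real a ^ 2" by simp
  then show ?thesis by (simp add: real_sqrt_mult)
qed

context fixes n :: nat assumes n3: "n \<ge> 3"
begin

interpretation E: eqpart "2*n" "Kf n" "clf n" "hf n" "gf n" "wfun n" by (rule eqpart_inst[OF n3])

lemma m_eq: "E.m c = card (Cn n c)" unfolding E.m_def E.C_def Cn_def ..

lemma spec_general: "dihedral_cse_sombor_spectrum n = proots (char_poly E.B1) +
   mset (map (\<lambda>i. - wfun n (clf n (gf n (Kf n + i))) (clf n (gf n (Kf n + i)))) [0..<2*n - Kf n])"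
proof -
  have vs: "map (\<lambda>k. (k, False)) [0..<n] @ map (\<lambda>k. (k, True)) [0..<n] = vsl n" by (simp add: vsl_def)
  let ?L = "map (\<lambda>i. [: wfun n (clf n (gf n (Kf n + i))) (clf n (gf n (Kf n + i))), 1 :]) [0..<2*n - Kf n]"
  have "dihedral_cse_sombor_spectrum n = proots (char_poly E.Am)"
    unfolding dihedral_cse_sombor_spectrum_def sombor_spectrum_def vs sombor_Am[OF n3] ..
  also have "char_poly E.Am = char_poly E.B1 * prod_list ?L" by (rule E.main)
  also have "proots \<dots> = proots (char_poly E.B1) + proots (prod_list ?L)"
  proof (rule proots_mult)
    have "E.B1 \<in> carrier_mat (Kf n) (Kf n)" by (simp add: E.B1_def)
    from degree_monic_char_poly[OF this] show "char_poly E.B1 \<noteq> 0" by auto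
    show "prod_list ?L \<noteq> 0" by (auto simp: prod_list_zero_iff)
  qed
  also have "proots (prod_list ?L) = mset (map (\<lambda>i. - wfun n (clf n (gf n (Kf n + i))) (clf n (gf n (Kf n + i)))) [0..<2*n - Kf n])"
  proof -
    have "proots (prod_list ?L) = sum_list (map proots ?L)"
    proof -
      have nz: "0 \<notin> set ?L" by auto
      show ?thesis using proots_prod_list[OF nz] by simp
    qed
    also have "\<dots> = sum_list (map (\<lambda>i. {# - wfun n (clf n (gf n (Kf n + i))) (clf n (gf n (Kf n + i))) #}) [0..<2*n - Kf n])"
      by (simp add: o_def)
    finally show ?thesis by (simp only: sum_list_singletons)
  qed
  finally show ?thesis .
qed

lemma cls_low: "i < n - 2 \<Longrightarrow> clf n (gf n (Kf n + i)) = 1"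
  using n3 by (auto simp: clf_def gf_def Kf_def)

lemma cls_high: "n - 2 \<le> i \<Longrightarrow> i < 2*n - Kf n \<Longrightarrow> clf n (gf n (Kf n + i)) \<in> {2,3}"
  using n3 by (auto simp: clf_def gf_def Kf_def)

lemma wcc: "wfun n c c = complex_of_real (real (dgf n c) * sqrt 2)"
  unfolding wfun_def sqrt_dbl by simp

lemma w11: "wfun n 1 1 = (of_nat n - 1) * complex_of_real (sqrt 2)"
proof -
  have "dgf n 1 = n - 1" using card_C1[of n] n3 by (simp add: dgf_def)
  then show ?thesis unfolding wcc using n3 by (simp add: of_nat_diff)
qed

end

lemma card_C0: "n > 0 \<Longrightarrow> card (Cn n 0) = 1"
proof -
  assume "n > 0"
  then have "Cn n 0 = {0}" by (auto simp: Cn_def clf0)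
  then show ?thesis by simp
qed

lemma wf_sym: "wfun n c d = wfun n d c"
  unfolding wfun_def by (auto simp: add.commute)

context fixes n :: nat assumes n3: "n \<ge> 3" and odd: "odd n"
begin

interpretation E: eqpart "2*n" "Kf n" "clf n" "hf n" "gf n" "wfun n" by (rule eqpart_inst[OF n3])

lemma K3: "Kf n = 3" using odd by (simp add: Kf_def)

definition "pp = wfun n 0 1"
definition "qq = wfun n 0 2"

lemma pp2: "pp * pp = 5 * of_nat n ^ 2 - 6 * of_nat n + 2"
proof -
  have "dgf n 0 = 2*n - 1" "dgf n 1 = n - 1" using card_C1[of n] n3 by (auto simp: dgf_def)
  then have "pp = complex_of_real (sqrt (real (2*n-1)^2 + real (n-1)^2))" unfolding pp_def wfun_def by simp
  then have "pp * pp = complex_of_real (real (2*n-1)^2 + real (n-1)^2)"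
    by (simp del: of_real_mult add: of_real_mult[symmetric])
  also have "\<dots> = 5 * of_nat n ^ 2 - 6 * of_nat n + 2" using n3 by (simp add: of_nat_diff power2_eq_square algebra_simps)
  finally show ?thesis .
qed

lemma qq2: "qq * qq = 5 * of_nat n ^ 2 - 4 * of_nat n + 1"
proof -
  have "dgf n 0 = 2*n - 1" "dgf n 2 = n" using card_C2_odd[OF odd] n3 by (auto simp: dgf_def)
  then have "qq = complex_of_real (sqrt (real (2*n-1)^2 + real n^2))" unfolding qq_def wfun_def by simp
  then have "qq * qq = complex_of_real (real (2*n-1)^2 + real n^2)"
    by (simp del: of_real_mult add: of_real_mult[symmetric])
  also have "\<dots> = 5 * of_nat n ^ 2 - 4 * of_nat n + 1" using n3 by (simp add: of_nat_diff power2_eq_square algebra_simps)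
  finally show ?thesis .
qed

lemma w22: "wfun n 2 2 = of_nat n * complex_of_real (sqrt 2)"
  unfolding wcc[OF n3] using card_C2_odd[OF odd] by (simp add: dgf_def)

lemma w12: "wfun n 1 2 = 0" "wfun n 2 1 = 0" "wfun n (Suc 0) 2 = 0" "wfun n 2 (Suc 0) = 0" by (simp_all add: wfun_def)

lemma charB1_odd: "char_poly E.B1 = [:0, 1:] * [:- ((of_nat n - 1) * (of_nat n - 2) * complex_of_real (sqrt 2)), 1:]
                       * [:- (of_nat n * (of_nat n - 1) * complex_of_real (sqrt 2)), 1:]
          - Polynomial.smult ((of_nat n - 1) * (5 * of_nat n ^ 2 - 6 * of_nat n + 2))
                  [:- (of_nat n * (of_nat n - 1) * complex_of_real (sqrt 2)), 1:]
          - Polynomial.smult (of_nat n * (5 * of_nat n ^ 2 - 4 * of_nat n + 1))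
                  [:- ((of_nat n - 1) * (of_nat n - 2) * complex_of_real (sqrt 2)), 1:]"
  (is "_ = ?T")
proof -
  have cB: "E.B1 \<in> carrier_mat 3 3" unfolding E.B1_def by (simp add: K3)
  let ?M = "\<lambda>x. - char_matrix E.B1 x"
  have cM: "?M x \<in> carrier_mat 3 3" for x using cB by simp
  have ms: "E.m 0 = 1" "E.m 1 = n - 1" "E.m 2 = n" "E.m (Suc 0) = n - 1"
    using card_C0[of n] card_C1[of n] card_C2_odd[OF odd] n3 by (auto simp: m_eq)
  let ?N = "of_nat n :: complex" let ?S = "complex_of_real (sqrt 2)"
  have ent: "?M x $$ (i,j) = of_bool (i = j) * x - wfun n i j * (of_nat (E.m j) - of_bool (i = j))"
    if "i < 3" "j < 3" for i j x
    using that cB unfolding E.B1_def by (simp add: char_matrix_def K3)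
  have "poly (char_poly E.B1) x = poly ?T x" for x
  proof -
    have "poly (char_poly E.B1) x = det (?M x)" by (rule char_poly_matrix[OF cB])
    also have "\<dots> = x * ((x - wfun n 1 1 * (?N - 2)) * (x - wfun n 2 2 * (?N - 1)))
       - (wfun n 0 1 * wfun n 0 1) * (?N - 1) * (x - wfun n 2 2 * (?N - 1))
       - (wfun n 0 2 * wfun n 0 2) * ?N * (x - wfun n 1 1 * (?N - 2))"
      unfolding det3[OF cM] using n3 wf_sym[of n 1 0] wf_sym[of n 2 0]
      by (simp add: ent ms w12 of_nat_diff; (simp add: algebra_simps)?)
    also have "\<dots> = poly ?T x"
      unfolding pp2[unfolded pp_def] qq2[unfolded qq_def] w11[OF n3] w22
      by (simp add: algebra_simps)
    finally show ?thesis .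
  qed
  then show ?thesis using poly_eq_poly_eq_iff by blast
qed

lemma odd_final: "dihedral_cse_sombor_spectrum n =
      replicate_mset (n - 2) (- (of_nat n - 1) * complex_of_real (sqrt 2))
    + replicate_mset (n - 1) (- of_nat n * complex_of_real (sqrt 2))
    + proots ([:0, 1:] * [:- ((of_nat n - 1) * (of_nat n - 2) * complex_of_real (sqrt 2)), 1:]
                       * [:- (of_nat n * (of_nat n - 1) * complex_of_real (sqrt 2)), 1:]
          - Polynomial.smult ((of_nat n - 1) * (5 * of_nat n ^ 2 - 6 * of_nat n + 2))
                  [:- (of_nat n * (of_nat n - 1) * complex_of_real (sqrt 2)), 1:]
          - Polynomial.smult (of_nat n * (5 * of_nat n ^ 2 - 4 * of_nat n + 1))
                  [:- ((of_nat n - 1) * (of_nat n - 2) * complex_of_real (sqrt 2)), 1:])"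
proof -
  let ?f = "\<lambda>i. - wfun n (clf n (gf n (Kf n + i))) (clf n (gf n (Kf n + i)))"
  have "mset (map ?f [0..<2*n - Kf n]) = replicate_mset (n - 2) (- (of_nat n - 1) * complex_of_real (sqrt 2))
    + replicate_mset (2*n - Kf n - (n - 2)) (- of_nat n * complex_of_real (sqrt 2))"
  proof (rule mset_two_const)
    show "n - 2 \<le> 2*n - Kf n" using n3 K3 by simp
    fix i assume "i < n - 2" then show "?f i = - (of_nat n - 1) * complex_of_real (sqrt 2)"
      using cls_low[OF n3] w11[OF n3] by (simp add: algebra_simps)
  next
    fix i assume i: "n - 2 \<le> i" "i < 2*n - Kf n"
    have "clf n (gf n (Kf n + i)) \<noteq> 3" using odd by (simp add: clf_def)
    then have "clf n (gf n (Kf n + i)) = 2" using cls_high[OF n3 i] by auto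
    then show "?f i = - of_nat n * complex_of_real (sqrt 2)" using w22 by simp
  qed
  moreover have "2*n - Kf n - (n - 2) = n - 1" using n3 K3 by simp
  ultimately show ?thesis unfolding spec_general[OF n3] charB1_odd by (simp add: add_ac)
qed

end

context fixes n :: nat assumes n3: "n \<ge> 3" and evn: "even n"
begin

interpretation E: eqpart "2*n" "Kf n" "clf n" "hf n" "gf n" "wfun n" by (rule eqpart_inst[OF n3])

lemma K4: "Kf n = 4" using evn by (simp add: Kf_def)

lemma half: "(of_nat (n div 2) :: complex) = of_nat n / 2"
  using evn by (metis dvd_mult_div_cancel of_nat_mult of_nat_numeral nonzero_mult_div_cancel_left zero_neq_numeral)

lemma pp2e: "wfun n 0 1 * wfun n 0 1 = 5 * of_nat n ^ 2 - 6 * of_nat n + 2"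
proof -
  have "dgf n 0 = 2*n - 1" "dgf n 1 = n - 1" using card_C1[of n] n3 by (auto simp: dgf_def)
  then have "wfun n 0 1 = complex_of_real (sqrt (real (2*n-1)^2 + real (n-1)^2))" unfolding wfun_def by simp
  then have "wfun n 0 1 * wfun n 0 1 = complex_of_real (real (2*n-1)^2 + real (n-1)^2)"
    by (simp del: of_real_mult add: of_real_mult[symmetric])
  also have "\<dots> = 5 * of_nat n ^ 2 - 6 * of_nat n + 2" using n3 by (simp add: of_nat_diff power2_eq_square algebra_simps)
  finally show ?thesis .
qed

lemma dg23: "dgf n 2 = n div 2" "dgf n 3 = n div 2"
  using card_C2_even[OF evn] card_C3_even[OF evn] n3 by (auto simp: dgf_def)

lemma qq2e: "wfun n 0 c * wfun n 0 c = (17 * of_nat n ^ 2 - 16 * of_nat n + 4) / 4"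
  if "c = 2 \<or> c = 3"
proof -
  have "dgf n 0 = 2*n - 1" "dgf n c = n div 2" using dg23 that by (auto simp: dgf_def)
  then have "wfun n 0 c = complex_of_real (sqrt (real (2*n-1)^2 + real (n div 2)^2))" unfolding wfun_def using that by auto
  then have "wfun n 0 c * wfun n 0 c = complex_of_real (real (2*n-1)^2 + real (n div 2)^2)"
    by (simp del: of_real_mult add: of_real_mult[symmetric])
  also have "\<dots> = (of_nat (2*n-1))^2 + (of_nat (n div 2))^2" by simp
  also have "\<dots> = (17 * of_nat n ^ 2 - 16 * of_nat n + 4) / 4"
    using n3 unfolding half by (simp add: of_nat_diff power2_eq_square field_simps)
  finally show ?thesis .
qed

lemma w22e: "wfun n 2 2 = of_nat n / 2 * complex_of_real (sqrt 2)" "wfun n 3 3 = of_nat n / 2 * complex_of_real (sqrt 2)"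
  unfolding wcc[OF n3] dg23 using half by simp_all

lemma wz: "wfun n 1 2 = 0" "wfun n 2 1 = 0" "wfun n (Suc 0) 2 = 0" "wfun n 2 (Suc 0) = 0"
  "wfun n 1 3 = 0" "wfun n 3 1 = 0" "wfun n (Suc 0) 3 = 0" "wfun n 3 (Suc 0) = 0" "wfun n 2 3 = 0" "wfun n 3 2 = 0"
  by (simp_all add: wfun_def)

lemma w03: "wfun n 0 3 = wfun n 0 2" unfolding wfun_def dg23 by simp

lemma w33: "wfun n 3 3 = wfun n 2 2" by (simp only: w22e)

lemma sucs: "Suc (Suc 0) = 2" by simp

lemma charB1_even: "char_poly E.B1 = [: - (of_nat n * (of_nat n - 2) / 4 * complex_of_real (sqrt 2)), 1 :] *
    ([:0, 1:] * [:- ((of_nat n - 1) * (of_nat n - 2) * complex_of_real (sqrt 2)), 1:]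
                       * [:- (of_nat n * (of_nat n - 2) / 4 * complex_of_real (sqrt 2)), 1:]
          - Polynomial.smult ((of_nat n - 1) * (5 * of_nat n ^ 2 - 6 * of_nat n + 2))
                  [:- (of_nat n * (of_nat n - 2) / 4 * complex_of_real (sqrt 2)), 1:]
          - Polynomial.smult (of_nat n / 4 * (17 * of_nat n ^ 2 - 16 * of_nat n + 4))
                  [:- ((of_nat n - 2) * (of_nat n - 1) * complex_of_real (sqrt 2)), 1:])"
  (is "_ = ?T")
proof -
  have cB: "E.B1 \<in> carrier_mat 4 4" unfolding E.B1_def by (simp add: K4)
  let ?M = "\<lambda>x. - char_matrix E.B1 x"
  have cM: "?M x \<in> carrier_mat 4 4" for x using cB by simp
  have cD: "mat_delete (?M x) i 0 \<in> carrier_mat 3 3" for x i using mat_delete_carrier[OF cM[of x]] by simp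
  have ms: "E.m 0 = 1" "E.m 1 = n - 1" "E.m 2 = n div 2" "E.m 3 = n div 2" "E.m (Suc 0) = n - 1"
    using card_C0[of n] card_C1[of n] card_C2_even[OF evn] card_C3_even[OF evn] n3 by (auto simp: m_eq)
  let ?N = "of_nat n :: complex" let ?S = "complex_of_real (sqrt 2)"
  have ent: "?M x $$ (i,j) = of_bool (i = j) * x - wfun n i j * (of_nat (E.m j) - of_bool (i = j))"
    if "i < 4" "j < 4" for i j x
    using that cB unfolding E.B1_def by (simp add: char_matrix_def K4)
  have md: "mat_delete (?M x) i 0 $$ (i',j') = of_bool ((if i' < i then i' else Suc i') = Suc j') * x
      - wfun n (if i' < i then i' else Suc i') (Suc j') * (of_nat (E.m (Suc j')) - of_bool ((if i' < i then i' else Suc i') = Suc j'))"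
    if "i' < 3" "j' < 3" "i < 4" for i i' j' x
  proof -
    have "mat_delete (?M x) i 0 $$ (i',j') = ?M x $$ (if i' < i then i' else Suc i', Suc j')"
      using that cM[of x] unfolding mat_delete_def by simp
    also have "\<dots> = of_bool ((if i' < i then i' else Suc i') = Suc j') * x
      - wfun n (if i' < i then i' else Suc i') (Suc j') * (of_nat (E.m (Suc j')) - of_bool ((if i' < i then i' else Suc i') = Suc j'))"
      by (rule ent) (use that in auto)
    finally show ?thesis .
  qed
  have "poly (char_poly E.B1) x = poly ?T x" for x
  proof -
    let ?d1 = "x - wfun n 1 1 * (?N - 2)" let ?d2 = "x - wfun n 2 2 * (?N / 2 - 1)"
    have "poly (char_poly E.B1) x = det (?M x)" by (rule char_poly_matrix[OF cB])
    also have "\<dots> = x * ?d1 * ?d2 * ?d2 - (wfun n 0 1 * wfun n 0 1) * (?N - 1) * ?d2 * ?d2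
       - (wfun n 0 2 * wfun n 0 2) * (?N / 2) * ?d1 * ?d2 - (wfun n 0 2 * wfun n 0 2) * (?N / 2) * ?d1 * ?d2"
      unfolding det4[OF cM] det3[OF cD] using n3 wf_sym[of n 1 0] wf_sym[of n 2 0] wf_sym[of n 3 0] w03 w33
      by (simp add: md ent ms wz of_nat_diff half sucs; (simp add: algebra_simps)?)
    also have "\<dots> = poly ?T x"
    proof -
      define H :: complex where "H = of_nat (n div 2)"
      have NH: "?N = 2 * H" unfolding H_def half by simp
      have f1: "?N / 2 = H" unfolding NH by simp
      have f2: "?N * (?N - 2) / 4 = H * (H - 1)" unfolding NH by (simp add: field_simps)
      have f3: "?N / 4 * (17 * ?N ^ 2 - 16 * ?N + 4) = 2 * H * (17 * H^2 - 8 * H + 1)"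
        unfolding NH by (simp add: field_simps power2_eq_square)
      have f4: "(17 * ?N ^ 2 - 16 * ?N + 4) / 4 = 17 * H^2 - 8 * H + 1"
        unfolding NH by (simp add: field_simps power2_eq_square)
      have q2': "wfun n 0 2 * wfun n 0 2 = (17 * ?N ^ 2 - 16 * ?N + 4) / 4" by (rule qq2e) simp
      show ?thesis
        unfolding pp2e q2'[unfolded f4] w11[OF n3] w22e f1 f2 f3
        unfolding NH by (simp add: algebra_simps)
    qed
    finally show ?thesis .
  qed
  then show ?thesis using poly_eq_poly_eq_iff by blast
qed

lemma even_final: "dihedral_cse_sombor_spectrum n =
      replicate_mset (n - 2) (- (of_nat n / 2) * complex_of_real (sqrt 2))
    + replicate_mset (n - 2) (- (of_nat n - 1) * complex_of_real (sqrt 2))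
    + {# of_nat n * (of_nat n - 2) / 4 * complex_of_real (sqrt 2) #}
    + proots ([:0, 1:] * [:- ((of_nat n - 1) * (of_nat n - 2) * complex_of_real (sqrt 2)), 1:]
                       * [:- (of_nat n * (of_nat n - 2) / 4 * complex_of_real (sqrt 2)), 1:]
          - Polynomial.smult ((of_nat n - 1) * (5 * of_nat n ^ 2 - 6 * of_nat n + 2))
                  [:- (of_nat n * (of_nat n - 2) / 4 * complex_of_real (sqrt 2)), 1:]
          - Polynomial.smult (of_nat n / 4 * (17 * of_nat n ^ 2 - 16 * of_nat n + 4))
                  [:- ((of_nat n - 2) * (of_nat n - 1) * complex_of_real (sqrt 2)), 1:])"
  (is "_ = ?A + ?B + ?C + proots ?P")
proof -
  let ?t = "of_nat n * (of_nat n - 2) / 4 * complex_of_real (sqrt 2) :: complex"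
  let ?f = "\<lambda>i. - wfun n (clf n (gf n (Kf n + i))) (clf n (gf n (Kf n + i)))"
  have "mset (map ?f [0..<2*n - Kf n]) = replicate_mset (n - 2) (- (of_nat n - 1) * complex_of_real (sqrt 2))
    + replicate_mset (2*n - Kf n - (n - 2)) (- (of_nat n / 2) * complex_of_real (sqrt 2))"
  proof (rule mset_two_const)
    show "n - 2 \<le> 2*n - Kf n" using n3 K4 by simp
    fix i assume "i < n - 2" then show "?f i = - (of_nat n - 1) * complex_of_real (sqrt 2)"
      using cls_low[OF n3] w11[OF n3] by (simp add: algebra_simps)
  next
    fix i assume i: "n - 2 \<le> i" "i < 2*n - Kf n"
    then have "clf n (gf n (Kf n + i)) = 2 \<or> clf n (gf n (Kf n + i)) = 3" using cls_high[OF n3 i] by auto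
    then show "?f i = - (of_nat n / 2) * complex_of_real (sqrt 2)" using w22e by auto
  qed
  moreover have "2*n - Kf n - (n - 2) = n - 2" using n3 K4 by simp
  moreover have "proots (char_poly E.B1) = {# ?t #} + proots ?P"
  proof -
    have "E.B1 \<in> carrier_mat (Kf n) (Kf n)" by (simp add: E.B1_def)
    from degree_monic_char_poly[OF this] have nz: "char_poly E.B1 \<noteq> 0" by auto
    then have "?P \<noteq> 0" unfolding charB1_even by auto
    then show ?thesis unfolding charB1_even by (subst proots_mult) auto
  qed
  ultimately show ?thesis unfolding spec_general[OF n3] by (simp add: add_ac)
qed

end

theorem corollary5p6:
  fixes n :: nat
  assumes "n \<ge> 3"
  shows "(odd n \<longrightarrow> dihedral_cse_sombor_spectrum n =
      replicate_mset (n - 2) (- (of_nat n - 1) * complex_of_real (sqrt 2))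
    + replicate_mset (n - 1) (- of_nat n * complex_of_real (sqrt 2))
    + proots ([:0, 1:] * [:- ((of_nat n - 1) * (of_nat n - 2) * complex_of_real (sqrt 2)), 1:]
                       * [:- (of_nat n * (of_nat n - 1) * complex_of_real (sqrt 2)), 1:]
          - Polynomial.smult ((of_nat n - 1) * (5 * of_nat n ^ 2 - 6 * of_nat n + 2))
                  [:- (of_nat n * (of_nat n - 1) * complex_of_real (sqrt 2)), 1:]
          - Polynomial.smult (of_nat n * (5 * of_nat n ^ 2 - 4 * of_nat n + 1))
                  [:- ((of_nat n - 1) * (of_nat n - 2) * complex_of_real (sqrt 2)), 1:])) \<and>
    (even n \<longrightarrow> dihedral_cse_sombor_spectrum n =
      replicate_mset (n - 2) (- (of_nat n / 2) * complex_of_real (sqrt 2))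
    + replicate_mset (n - 2) (- (of_nat n - 1) * complex_of_real (sqrt 2))
    + {# of_nat n * (of_nat n - 2) / 4 * complex_of_real (sqrt 2) #}
    + proots ([:0, 1:] * [:- ((of_nat n - 1) * (of_nat n - 2) * complex_of_real (sqrt 2)), 1:]
                       * [:- (of_nat n * (of_nat n - 2) / 4 * complex_of_real (sqrt 2)), 1:]
          - Polynomial.smult ((of_nat n - 1) * (5 * of_nat n ^ 2 - 6 * of_nat n + 2))
                  [:- (of_nat n * (of_nat n - 2) / 4 * complex_of_real (sqrt 2)), 1:]
          - Polynomial.smult (of_nat n / 4 * (17 * of_nat n ^ 2 - 16 * of_nat n + 4))
                  [:- ((of_nat n - 2) * (of_nat n - 1) * complex_of_real (sqrt 2)), 1:]))"
  using odd_final[OF assms] even_final[OF assms] by blast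

end
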